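(* Let $s\in(0,1)$, $0<\iota<\min\{s,1/3\}$, let $\omega$ satisfy condition (M) with parameter $\iota$, and let $C>0$. Then there exist $t_0>0$ and a function $\zeta:[0,\infty)\to[0,\infty)$ with $\zeta\in C([0,\infty))\cap C^2((0,\infty))\cap C^3((0,2))$ satisfying (Z0), (Z1), (Z2), (Z3), (Z4) and $$C\big(t^s+\omega(t)\big)\le t\zeta'(t)\quad\text{for all }0<t<t_0.$$
   Context: Condition (M) with parameter $\iota$: $\omega:[0,\infty)\to[0,\infty)$ is continuous, increasing and concave, $C^2$ on $(0,\infty)$, $\omega(0)=0$, $\int_0^1\omega(t)/t\,dt<\infty$, and there is $t_0>0$ with $\omega(t)/t^\iota$ decreasing on $(0,t_0)$ and $t^2\omega''(t)\ge-\omega(t)-3t\omega'(t)$ on $(0,t_0)$. (Z0): $\zeta$ positive on $(0,\infty)$, increasing, concave, $\zeta(0)=0$. (Z1): there are $c_1>0$, $t_0\in(0,1)$ with $t^2\zeta'''(t)\ge-c_1\zeta'(t)$ for $0<t<t_0$. (Z2): $t\mapsto t\zeta'(t)$ nondecreasing on $(0,\infty)$. (Z3): there are $\iota>0$, $t_0>0$ such that $\zeta(t)/t^\iota$ is decreasing on $(0,t_0]$. (Z4): there is $c_2>0$ with $\zeta(t)\le c_2(1+t)^{s/2}$ for $t\ge0$. *)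

theory Defs
  imports "HOL-Analysis.Analysis"
begin

definition Ck_on :: "nat \<Rightarrow> (real \<Rightarrow> real) \<Rightarrow> real set \<Rightarrow> bool" where
  "Ck_on k f S \<longleftrightarrow>
     (\<forall>j<k. \<forall>x\<in>S. ((deriv ^^ j) f has_real_derivative (deriv ^^ Suc j) f x) (at x))
     \<and> continuous_on S ((deriv ^^ k) f)"

definition cond_M :: "real \<Rightarrow> (real \<Rightarrow> real) \<Rightarrow> bool" where
  "cond_M \<iota> \<omega> \<longleftrightarrow>
     (\<forall>t\<ge>0. \<omega> t \<ge> 0) \<and>
     continuous_on {0..} \<omega> \<and>
     mono_on {0..} \<omega> \<and>
     concave_on {0..} \<omega> \<and>
     Ck_on 2 \<omega> {0<..} \<and>
     \<omega> 0 = 0 \<and>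
     (\<lambda>t. \<omega> t / t) integrable_on {0..1} \<and>
     (\<exists>t0>0. antimono_on {0<..<t0} (\<lambda>t. \<omega> t / t powr \<iota>) \<and>
        (\<forall>t\<in>{0<..<t0}. t\<^sup>2 * deriv (deriv \<omega>) t \<ge> - \<omega> t - 3 * t * deriv \<omega> t))"

end

theory Submission imports Defs begin

definition Zf :: "(real \<Rightarrow> real) \<Rightarrow> real \<Rightarrow> real" where
  "Zf \<rho> t = integral {0..t} (\<lambda>u. \<rho> u / ((1 + \<rho> u) * u))"

lemma integ01:
  fixes \<rho> :: "real \<Rightarrow> real"
  assumes cont: "continuous_on {0..} \<rho>" and nn: "\<forall>t\<ge>0. \<rho> t \<ge> 0"
    and int: "(\<lambda>u. \<rho> u / u) integrable_on {0..1}"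
  shows "(\<lambda>u. \<rho> u / ((1 + \<rho> u) * u)) integrable_on {0..1}"
proof -
  have c0: "continuous_on {0<..1} \<rho>" using cont by (rule continuous_on_subset) auto
  have "\<forall>x\<in>{0<..1}. (1 + \<rho> x) * x \<noteq> 0" using nn
      by (smt (verit, del_insts) greaterThanAtMost_iff mult_eq_0_iff)
  then have c: "continuous_on {0<..1} (\<lambda>u. \<rho> u / ((1 + \<rho> u) * u))"
    using c0 by (intro continuous_on_divide continuous_intros) auto
  have neg: "negligible (({0..1} - {0<..1}) \<union> ({0<..1} - {0..1::real}))"
    by (rule negligible_subset[of "{0}"]) auto
  have g: "(\<lambda>u. \<rho> u / u) integrable_on {0<..1}"
    using int integrable_spike_set_eq[OF neg] by blast
  have "(\<lambda>u. \<rho> u / ((1 + \<rho> u) * u)) integrable_on {0<..1}"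
  proof (rule measurable_bounded_by_integrable_imp_integrable[OF _ g])
    show "(\<lambda>u. \<rho> u / ((1 + \<rho> u) * u)) \<in> borel_measurable (lebesgue_on {0<..1})"
      by (rule continuous_imp_measurable_on_sets_lebesgue[OF c]) auto
    show "{0<..1::real} \<in> sets lebesgue" by auto
    show "norm (\<rho> x / ((1 + \<rho> x) * x)) \<le> \<rho> x / x" if "x \<in> {0<..1}" for x
    proof -
      have x: "x > 0" "\<rho> x \<ge> 0" using that nn by auto
      have "\<rho> x / ((1 + \<rho> x) * x) \<le> \<rho> x / x"
        using x by (simp add: divide_simps) (simp add: algebra_simps)
      moreover have "\<rho> x / ((1 + \<rho> x) * x) \<ge> 0" using x by auto
      ultimately show ?thesis by (metis real_norm_def abs_of_nonneg)
    qed
  qed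
  then show ?thesis using integrable_spike_set_eq[OF neg] by blast
qed

lemma integ_b:
  fixes \<rho> :: "real \<Rightarrow> real" and b :: real
  assumes cont: "continuous_on {0..} \<rho>" and nn: "\<forall>t\<ge>0. \<rho> t \<ge> 0"
    and int: "(\<lambda>u. \<rho> u / u) integrable_on {0..1}" and b: "b \<ge> 0"
  shows "(\<lambda>u. \<rho> u / ((1 + \<rho> u) * u)) integrable_on {0..b}"
proof (cases "b \<le> 1")
  case True
  then show ?thesis using integ01[OF assms(1-3)] integrable_on_subinterval[of _ "{0..1}" 0 b] b by auto
next
  case False
  have "(\<lambda>u. \<rho> u / ((1 + \<rho> u) * u)) integrable_on {1..b}"
  proof (rule integrable_continuous_real)
    have c0: "continuous_on {1..b} \<rho>" using cont by (rule continuous_on_subset) auto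
    have "\<forall>x\<in>{1..b}. (1 + \<rho> x) * x \<noteq> 0" using nn
      by (smt (verit, del_insts) atLeastAtMost_iff mult_eq_0_iff)
    then show "continuous_on {1..b} (\<lambda>u. \<rho> u / ((1 + \<rho> u) * u))"
      using c0 by (intro continuous_on_divide continuous_on_mult continuous_on_add continuous_on_const continuous_on_id) auto
  qed
  moreover have "(\<lambda>u. \<rho> u / ((1 + \<rho> u) * u)) integrable_on {0..1}" using integ01[OF assms(1-3)] .
  ultimately show ?thesis using False Henstock_Kurzweil_Integration.integrable_combine[where a=0 and c=1 and b=b] by auto
qed

lemma Zf_deriv:
  fixes \<rho> :: "real \<Rightarrow> real"
  assumes cont: "continuous_on {0..} \<rho>" and nn: "\<forall>t\<ge>0. \<rho> t \<ge> 0"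
    and int: "(\<lambda>u. \<rho> u / u) integrable_on {0..1}" and t: "t > 0"
  shows "(Zf \<rho> has_real_derivative \<rho> t / ((1 + \<rho> t) * t)) (at t)"
proof -
  have i: "(\<lambda>u. \<rho> u / ((1 + \<rho> u) * u)) integrable_on {0..t+1}"
    using integ_b[OF assms(1-3)] t by auto
  have ct: "continuous (at t) (\<lambda>u. \<rho> u / ((1 + \<rho> u) * u))"
  proof -
    have "isCont \<rho> t" using cont t by (intro continuous_on_interior[of "{0..}"]) auto
    moreover have "(1 + \<rho> t) * t \<noteq> 0" using nn t
      by (smt (verit, del_insts) mult_eq_0_iff)
    ultimately show ?thesis by (intro continuous_divide continuous_mult continuous_add continuous_const continuous_ident) (simp_all add: Lim_ident_at)
  qed
  have "((\<lambda>u. integral {0..u} (\<lambda>u. \<rho> u / ((1 + \<rho> u) * u))) has_vector_derivative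
      \<rho> t / ((1 + \<rho> t) * t)) (at t within ({0..t+1} - {}))"
    by (rule integral_has_vector_derivative_continuous_at[OF i])
       (use t continuous_at_imp_continuous_within[OF ct] in simp_all)
  moreover have "at t within ({0..t+1} - {}) = at t"
    unfolding Diff_empty by (rule at_within_interior) (use t in auto)
  ultimately have "((\<lambda>u. integral {0..u} (\<lambda>u. \<rho> u / ((1 + \<rho> u) * u))) has_vector_derivative
      \<rho> t / ((1 + \<rho> t) * t)) (at t)" by simp
  then show ?thesis unfolding has_real_derivative_iff_has_vector_derivative Zf_def[abs_def] .
qed

lemma concave_from_deriv:
  fixes f g :: "real \<Rightarrow> real"
  assumes cont: "continuous_on {0..} f"
    and d: "\<And>x. x > 0 \<Longrightarrow> (f has_real_derivative g x) (at x)"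
    and dec: "\<And>x y. 0 < x \<Longrightarrow> x \<le> y \<Longrightarrow> g y \<le> g x"
  shows "concave_on {0..} f"
proof (rule concave_on_linorderI)
  show "convex {0::real..}" by (rule convex_real_interval)
  fix t x y :: real
  assume t: "t > 0" "t < 1" and xy: "x \<in> {0..}" "y \<in> {0..}" "x < y"
  define z where "z = (1 - t) * x + t * y"
  have "z - x = t * (y - x)" by (simp add: z_def algebra_simps)
  then have xz: "x < z" using t xy by (smt (verit) mult_pos_pos)
  have "y - z = (1 - t) * (y - x)" by (simp add: z_def algebra_simps)
  then have zy: "z < y" using t xy by (smt (verit) mult_pos_pos)
  have dif: "f differentiable (at u)" if "u > 0" for u
    using d[OF that] real_differentiable_def by blast
  obtain l1 \<xi> where \<xi>: "x < \<xi>" "\<xi> < z" "DERIV f \<xi> :> l1" "f z - f x = (z - x) * l1"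
    using MVT[OF xz continuous_on_subset[OF cont]] xy dif by fastforce
  obtain l2 \<eta> where \<eta>: "z < \<eta>" "\<eta> < y" "DERIV f \<eta> :> l2" "f y - f z = (y - z) * l2"
    using MVT[OF zy continuous_on_subset[OF cont]] xy xz dif by fastforce
  have "l1 = g \<xi>" using \<xi> xy d[of \<xi>] DERIV_unique by fastforce
  moreover have "l2 = g \<eta>" using \<eta> \<xi> xy d[of \<eta>] DERIV_unique by fastforce
  ultimately have l: "l2 \<le> l1" using dec[of \<xi> \<eta>] \<xi> \<eta> xy by auto
  have e1: "z - x = t * (y - x)" and e2: "y - z = (1 - t) * (y - x)" by (simp_all add: z_def algebra_simps)
  have "t * (f y - f z) \<le> (1 - t) * (f z - f x)"
    using \<xi>(4) \<eta>(4) e1 e2 l t xy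
    by (simp add: mult_left_mono mult_nonneg_nonneg)
  then show "(1 - t) * f x + t * f y \<le> f ((1 - t) *\<^sub>R x + t *\<^sub>R y)"
    by (simp add: z_def algebra_simps)
qed

lemma Ck3_lemma:
  fixes f f1 f2 f3 :: "real \<Rightarrow> real"
  assumes S: "open S"
    and d1: "\<And>x. x \<in> S \<Longrightarrow> (f has_real_derivative f1 x) (at x)"
    and d2: "\<And>x. x \<in> S \<Longrightarrow> (f1 has_real_derivative f2 x) (at x)"
    and d3: "\<And>x. x \<in> S \<Longrightarrow> (f2 has_real_derivative f3 x) (at x)"
    and c3: "continuous_on S f3"
  shows "Ck_on 3 f S" "Ck_on 2 f S" "\<And>x. x \<in> S \<Longrightarrow> deriv f x = f1 x"
    "\<And>x. x \<in> S \<Longrightarrow> (deriv ^^ 3) f x = f3 x"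
proof -
  have e1: "deriv f x = f1 x" if "x \<in> S" for x using d1[OF that] by (rule DERIV_imp_deriv)
  have dd1: "(deriv f has_real_derivative f2 x) (at x)" if "x \<in> S" for x
    by (rule has_field_derivative_transform_within_open[OF d2[OF that] S that]) (simp add: e1)
  have e2: "deriv (deriv f) x = f2 x" if "x \<in> S" for x using dd1[OF that] by (rule DERIV_imp_deriv)
  have dd2: "(deriv (deriv f) has_real_derivative f3 x) (at x)" if "x \<in> S" for x
    by (rule has_field_derivative_transform_within_open[OF d3[OF that] S that]) (simp add: e2)
  have e3: "deriv (deriv (deriv f)) x = f3 x" if "x \<in> S" for x using dd2[OF that] by (rule DERIV_imp_deriv)
  have c2: "continuous_on S f2"
    using d3 by (meson DERIV_isCont continuous_at_imp_continuous_on)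
  show "Ck_on 3 f S"
    unfolding Ck_on_def
  proof (intro conjI ballI allI impI)
    fix j :: nat and x assume j: "j < 3" and x: "x \<in> S"
    then have "j = 0 \<or> j = 1 \<or> j = 2" by auto
    then show "((deriv ^^ j) f has_real_derivative (deriv ^^ Suc j) f x) (at x)"
      using d1[OF x] dd1[OF x] dd2[OF x] e1[OF x] e2[OF x] e3[OF x]
      by (auto simp: numeral_2_eq_2)
  next
    show "continuous_on S ((deriv ^^ 3) f)"
      using c3 e3 by (simp add: numeral_3_eq_3 continuous_on_eq)
  qed
  show "Ck_on 2 f S"
    unfolding Ck_on_def
  proof (intro conjI ballI allI impI)
    fix j :: nat and x assume j: "j < 2" and x: "x \<in> S"
    then have "j = 0 \<or> j = 1" by auto
    then show "((deriv ^^ j) f has_real_derivative (deriv ^^ Suc j) f x) (at x)"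
      using d1[OF x] dd1[OF x] e1[OF x] e2[OF x]
      by (auto simp: numeral_2_eq_2)
  next
    show "continuous_on S ((deriv ^^ 2) f)"
      using c2 e2 by (simp add: numeral_2_eq_2 continuous_on_eq)
  qed
  show "\<And>x. x \<in> S \<Longrightarrow> deriv f x = f1 x" by (rule e1)
  show "\<And>x. x \<in> S \<Longrightarrow> (deriv ^^ 3) f x = f3 x" using e3 by (simp add: numeral_3_eq_3)
qed

definition gZ :: "(real \<Rightarrow> real) \<Rightarrow> real \<Rightarrow> real" where
  "gZ \<rho> t = \<rho> t / ((1 + \<rho> t) * t)"
definition g1Z :: "(real \<Rightarrow> real) \<Rightarrow> (real \<Rightarrow> real) \<Rightarrow> real \<Rightarrow> real" where
  "g1Z \<rho> \<rho>1 t = \<rho>1 t / ((1 + \<rho> t)^2 * t) - \<rho> t / ((1 + \<rho> t) * t^2)"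
definition g2Z :: "(real \<Rightarrow> real) \<Rightarrow> (real \<Rightarrow> real) \<Rightarrow> (real \<Rightarrow> real) \<Rightarrow> real \<Rightarrow> real" where
  "g2Z \<rho> \<rho>1 \<rho>2 t = (- 2 * (\<rho>1 t)^2 / (1 + \<rho> t)^3 + \<rho>2 t / (1 + \<rho> t)^2) / t
     - 2 * \<rho>1 t / ((1 + \<rho> t)^2 * t^2) + 2 * \<rho> t / ((1 + \<rho> t) * t^3)"

lemma eq2: fixes r a t :: real assumes "r \<ge> 0" "t > 0"
  shows "(a * ((1 + r) * t) - r * ((0 + a) * t + 1 * (1 + r))) / ((1 + r) * t * ((1 + r) * t)) =
     a / ((1 + r)\<^sup>2 * t) - r / ((1 + r) * t\<^sup>2)"
proof -
  have "1 + r \<noteq> 0" "t \<noteq> 0" using assms by auto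
  then show ?thesis by (simp add: divide_simps power2_eq_square) (simp add: algebra_simps)
qed

lemma eq3: fixes r a b t :: real assumes "r \<ge> 0" "t > 0"
  shows "(b * ((1 + r)\<^sup>2 * t) - a * (of_nat 2 * ((0 + a) * (1 + r) ^ (2 - Suc 0)) * t + 1 * (1 + r)\<^sup>2))
      / ((1 + r)\<^sup>2 * t * ((1 + r)\<^sup>2 * t)) -
    (a * ((1 + r) * t\<^sup>2) - r * ((0 + a) * t\<^sup>2 + (of_nat 2 * (1 * t ^ (2 - Suc 0))) * (1 + r)))
      / ((1 + r) * t\<^sup>2 * ((1 + r) * t\<^sup>2)) =
    (- 2 * a\<^sup>2 / (1 + r)^3 + b / (1 + r)^2) / t
     - 2 * a / ((1 + r)^2 * t^2) + 2 * r / ((1 + r) * t^3)"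
proof -
  have "1 + r \<noteq> 0" "t \<noteq> 0" using assms by auto
  then show ?thesis by (simp add: divide_simps power2_eq_square power3_eq_cube) (simp add: algebra_simps)
qed

lemma g1_nonpos: fixes r a t :: real assumes "r \<ge> 0" "t > 0" "a \<ge> 0" "t * a \<le> r"
  shows "a / ((1 + r)\<^sup>2 * t) - r / ((1 + r) * t\<^sup>2) \<le> 0"
proof -
  have "a / ((1 + r)\<^sup>2 * t) = (t * a) / ((1 + r)\<^sup>2 * t\<^sup>2)" using assms by (simp add: power2_eq_square)
  also have "\<dots> \<le> r / ((1 + r)\<^sup>2 * t\<^sup>2)" using assms by (intro divide_right_mono) auto
  also have "\<dots> \<le> r / ((1 + r) * t\<^sup>2)"
    using assms by (intro divide_left_mono) (auto simp: power2_eq_square mult_right_mono)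
  finally show ?thesis by simp
qed

lemma g2_bound: fixes r a b t :: real assumes r: "r \<ge> 0" and t: "t > 0" and a: "a \<ge> 0" "t * a \<le> r"
    and b: "t\<^sup>2 * b \<ge> - 4 * r"
  shows "t\<^sup>2 * ((- 2 * a\<^sup>2 / (1 + r)^3 + b / (1 + r)^2) / t
     - 2 * a / ((1 + r)^2 * t^2) + 2 * r / ((1 + r) * t^3)) \<ge> - 6 * (r / ((1 + r) * t))"
proof -
  define x where "x = t * a"
  define y where "y = t\<^sup>2 * b"
  have x: "0 \<le> x" "x \<le> r" using a t by (auto simp: x_def)
  have y: "y \<ge> -4 * r" using b by (simp add: y_def)
  have nz: "1 + r \<noteq> 0" "t \<noteq> 0" using r t by auto
  have e1: "t\<^sup>2 * ((- 2 * a\<^sup>2 / (1 + r)^3 + b / (1 + r)^2) / t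
     - 2 * a / ((1 + r)^2 * t^2) + 2 * r / ((1 + r) * t^3)) =
     (- 2 * x\<^sup>2 + y * (1 + r) - 2 * x * (1 + r) + 2 * r * (1 + r)^2) / ((1 + r)^3 * t)"
    using nz unfolding x_def y_def by (simp add: divide_simps power2_eq_square power3_eq_cube) (simp add: algebra_simps)
  have e2: "- 6 * (r / ((1 + r) * t)) = (- 6 * r * (1 + r)^2) / ((1 + r)^3 * t)"
    using nz by (simp add: divide_simps power2_eq_square power3_eq_cube)
  have p1: "x\<^sup>2 \<le> r * (1 + r)^2"
  proof -
    have "x\<^sup>2 \<le> r\<^sup>2" using x by (intro power_mono) auto
    also have "r\<^sup>2 \<le> r * (1 + r)^2"
    proof -
      have q: "r \<le> (1 + r)^2" using r mult_nonneg_nonneg[OF r r] by (simp add: power2_eq_square algebra_simps)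
      show ?thesis using mult_left_mono[OF q r] by (simp add: power2_eq_square)
    qed
    finally show ?thesis .
  qed
  have p2: "x * (1 + r) \<le> r * (1 + r)^2"
  proof -
    have "x * (1 + r) \<le> r * (1 + r)" using x r by (intro mult_right_mono) auto
    also have "\<dots> \<le> r * (1 + r)^2" using r by (simp add: power2_eq_square mult_left_mono)
    finally show ?thesis .
  qed
  have p3: "y * (1 + r) \<ge> - 4 * r * (1 + r)^2"
  proof -
    have "y * (1 + r) \<ge> (- 4 * r) * (1 + r)" using y r by (intro mult_right_mono) auto
    moreover have "(- 4 * r) * (1 + r) \<ge> - 4 * r * (1 + r)^2" using r by (simp add: power2_eq_square mult_left_mono)
    ultimately show ?thesis by linarith
  qed
  have "(- 6 * r * (1 + r)^2) / ((1 + r)^3 * t) \<le> (- 2 * x\<^sup>2 + y * (1 + r) - 2 * x * (1 + r) + 2 * r * (1 + r)^2) / ((1 + r)^3 * t)"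
    using p1 p2 p3 r t by (intro divide_right_mono) auto
  then show ?thesis using e1 e2 by simp
qed

locale rho =
  fixes \<rho> \<rho>1 \<rho>2 :: "real \<Rightarrow> real"
  assumes cont: "continuous_on {0..} \<rho>" and nn: "\<forall>t\<ge>0. \<rho> t \<ge> 0" and z0: "\<rho> 0 = 0"
    and int: "(\<lambda>u. \<rho> u / u) integrable_on {0..1}" and mono: "mono_on {0..} \<rho>"
    and d1: "\<And>t. t > 0 \<Longrightarrow> (\<rho> has_real_derivative \<rho>1 t) (at t)"
    and d2: "\<And>t. t > 0 \<Longrightarrow> (\<rho>1 has_real_derivative \<rho>2 t) (at t)"
    and c2: "continuous_on {0<..} \<rho>2"
    and r1: "\<And>t. t > 0 \<Longrightarrow> 0 \<le> \<rho>1 t" and r1': "\<And>t. t > 0 \<Longrightarrow> t * \<rho>1 t \<le> \<rho> t"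
    and r2: "\<exists>t1>0. \<forall>t\<in>{0<..<t1}. t^2 * \<rho>2 t \<ge> - 4 * \<rho> t"
begin

lemma Zd1: "t > 0 \<Longrightarrow> (Zf \<rho> has_real_derivative gZ \<rho> t) (at t)"
  unfolding gZ_def by (rule Zf_deriv[OF cont nn int])

lemma nn': "t \<ge> 0 \<Longrightarrow> \<rho> t \<ge> 0" using nn by blast

lemma pos1: assumes t: "t \<ge> 0" shows "1 + \<rho> t > 0"
  using nn t by (smt (verit))

lemma Zd2: assumes t: "t > 0" shows "(gZ \<rho> has_real_derivative g1Z \<rho> \<rho>1 t) (at t)"
proof -
  have p: "1 + \<rho> t > 0" using pos1 t by simp
  show ?thesis
    unfolding gZ_def[abs_def] g1Z_def
    apply (rule DERIV_cong)
     apply (rule DERIV_divide d1[OF t] DERIV_mult DERIV_add DERIV_const DERIV_ident)+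
    using p t apply simp
    using nn t eq2 apply simp
    done
qed

lemma Zd3: assumes t: "t > 0" shows "(g1Z \<rho> \<rho>1 has_real_derivative g2Z \<rho> \<rho>1 \<rho>2 t) (at t)"
proof -
  have p: "1 + \<rho> t > 0" using pos1 t by simp
  have nz1: "(1 + \<rho> t)\<^sup>2 * t \<noteq> 0" and nz2: "(1 + \<rho> t) * t\<^sup>2 \<noteq> 0" using p t by auto
  have A: "((\<lambda>x. \<rho>1 x / ((1 + \<rho> x)\<^sup>2 * x)) has_real_derivative
     (\<rho>2 t * ((1 + \<rho> t)\<^sup>2 * t) - \<rho>1 t * (of_nat 2 * ((0 + \<rho>1 t) * (1 + \<rho> t) ^ (2 - Suc 0)) * t + 1 * (1 + \<rho> t)\<^sup>2))
      / ((1 + \<rho> t)\<^sup>2 * t * ((1 + \<rho> t)\<^sup>2 * t))) (at t)"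
    by (rule DERIV_divide[OF d2[OF t] DERIV_mult[OF DERIV_power[OF DERIV_add[OF DERIV_const d1[OF t]]] DERIV_ident] nz1])
  have B: "((\<lambda>x. \<rho> x / ((1 + \<rho> x) * x\<^sup>2)) has_real_derivative
     (\<rho>1 t * ((1 + \<rho> t) * t\<^sup>2) - \<rho> t * ((0 + \<rho>1 t) * t\<^sup>2 + (of_nat 2 * (1 * t ^ (2 - Suc 0))) * (1 + \<rho> t)))
      / ((1 + \<rho> t) * t\<^sup>2 * ((1 + \<rho> t) * t\<^sup>2))) (at t)"
    by (rule DERIV_divide[OF d1[OF t] DERIV_mult[OF DERIV_add[OF DERIV_const d1[OF t]] DERIV_power[OF DERIV_ident]] nz2])
  show ?thesis
    unfolding g1Z_def[abs_def] g2Z_def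
    by (rule DERIV_cong[OF DERIV_diff[OF A B]]) (rule eq3, use nn t in auto)
qed

lemma crho: "continuous_on {0<..} \<rho>" using cont by (rule continuous_on_subset) auto
lemma crho1: "continuous_on {0<..} \<rho>1"
  by (rule continuous_at_imp_continuous_on) (use d2 DERIV_isCont in auto)

lemma Zc3: "continuous_on {0<..} (g2Z \<rho> \<rho>1 \<rho>2)"
proof -
  have nz: "\<forall>x\<in>{0<..}. 1 + \<rho> x \<noteq> 0" using pos1 by (metis greaterThan_iff less_eq_real_def not_less_iff_gr_or_eq)
  show ?thesis unfolding g2Z_def[abs_def]
    using nz crho crho1 c2
    by (intro continuous_on_diff continuous_on_add continuous_on_divide continuous_on_mult continuous_on_power continuous_on_const continuous_on_id continuous_on_minus) auto
qed

lemma Z0: "Zf \<rho> 0 = 0" by (simp add: Zf_def)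

lemma Zcont: "continuous_on {0..} (Zf \<rho>)"
proof -
  have c01: "continuous_on {0..1} (Zf \<rho>)"
  proof -
    have "continuous_on {0..1} (\<lambda>x. integral {0..x} (\<lambda>u. \<rho> u / ((1 + \<rho> u) * u)))"
      by (rule indefinite_integral_continuous_1) (rule integ01[OF cont nn int])
    then show ?thesis unfolding Zf_def[abs_def] .
  qed
  show ?thesis unfolding continuous_on_eq_continuous_within
  proof
    fix x :: real assume x: "x \<in> {0..}"
    show "continuous (at x within {0..}) (Zf \<rho>)"
    proof (cases "x = 0")
      case True
      have "continuous (at 0 within {0..1}) (Zf \<rho>)"
        using c01[unfolded continuous_on_eq_continuous_within, rule_format, of 0] by simp
      moreover have e1: "at (0::real) within {0..1} = at_right 0" by (rule at_within_Icc_at_right) simp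
      moreover have e2: "at (0::real) within {0..} = at_right 0" by (rule at_within_Ici_at_right)
      ultimately show ?thesis unfolding True continuous_within by (simp only: e1 e2)
    next
      case False
      then have "x > 0" using x by auto
      then show ?thesis using continuous_at_imp_continuous_within DERIV_isCont Zd1 by blast
    qed
  qed
qed

lemma gZ_nn: assumes "t > 0" shows "gZ \<rho> t \<ge> 0"
proof -
  have "\<rho> t \<ge> 0" using nn' assms by simp
  then show ?thesis unfolding gZ_def using assms by simp
qed

lemma Zmono: "mono_on {0..} (Zf \<rho>)"
proof (rule mono_onI)
  fix x y :: real assume xy: "x \<in> {0..}" "y \<in> {0..}" "x \<le> y"
  show "Zf \<rho> x \<le> Zf \<rho> y"
  proof (rule DERIV_nonneg_imp_increasing_open[OF xy(3)])
    show "continuous_on {x..y} (Zf \<rho>)" by (rule continuous_on_subset[OF Zcont]) (use xy in auto)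
    fix u assume "x < u" "u < y"
    then have "u > 0" using xy by auto
    then show "\<exists>d. (Zf \<rho> has_real_derivative d) (at u) \<and> 0 \<le> d" using Zd1 gZ_nn by blast
  qed
qed

lemma Znn: "t \<ge> 0 \<Longrightarrow> Zf \<rho> t \<ge> 0"
  using Zmono Z0 by (metis atLeast_iff mono_onD order_refl)

lemma gdec: assumes "0 < x" "x \<le> y" shows "gZ \<rho> y \<le> gZ \<rho> x"
proof -
  have "- gZ \<rho> x \<le> - gZ \<rho> y"
  proof (rule DERIV_nonneg_imp_increasing_open[OF assms(2)])
    show "continuous_on {x..y} (\<lambda>t. - gZ \<rho> t)"
      using assms by (intro continuous_on_minus continuous_at_imp_continuous_on ballI DERIV_isCont[OF Zd2]) auto
    fix u assume u: "x < u" "u < y"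
    then have "u > 0" using assms by auto
    have "g1Z \<rho> \<rho>1 u \<le> 0" unfolding g1Z_def
      using g1_nonpos[of "\<rho> u" u "\<rho>1 u"] nn'[of u] r1[of u] r1'[of u] \<open>u > 0\<close> by simp
    then show "\<exists>d. ((\<lambda>t. - gZ \<rho> t) has_real_derivative d) (at u) \<and> 0 \<le> d"
      using DERIV_minus[OF Zd2[OF \<open>u > 0\<close>]] by fastforce
  qed
  then show ?thesis by simp
qed

lemma Zconc: "concave_on {0..} (Zf \<rho>)"
  by (rule concave_from_deriv[OF Zcont Zd1 gdec])

lemma tg: "t > 0 \<Longrightarrow> t * gZ \<rho> t = \<rho> t / (1 + \<rho> t)"
  unfolding gZ_def by auto

lemma Phi_mono: assumes "0 \<le> x" "x \<le> y" shows "\<rho> x / (1 + \<rho> x) \<le> \<rho> y / (1 + \<rho> y)"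
proof -
  have "\<rho> x \<le> \<rho> y" using mono assms by (auto intro: mono_onD)
  moreover have "\<rho> x \<ge> 0" using nn' assms by simp
  ultimately have "1 / (1 + \<rho> y) \<le> 1 / (1 + \<rho> x)" by (intro divide_left_mono) auto
  moreover have "\<rho> x / (1 + \<rho> x) = 1 - 1 / (1 + \<rho> x)" "\<rho> y / (1 + \<rho> y) = 1 - 1 / (1 + \<rho> y)"
    using pos1[of x] pos1[of y] assms by (simp_all add: field_simps)
  ultimately show ?thesis by linarith
qed

lemma Z1: "\<exists>t1>0. t1 < 1 \<and> (\<forall>t\<in>{0<..<t1}. t\<^sup>2 * g2Z \<rho> \<rho>1 \<rho>2 t \<ge> - 6 * gZ \<rho> t)"
proof -
  obtain t1 where t1: "t1 > 0" "\<forall>t\<in>{0<..<t1}. t^2 * \<rho>2 t \<ge> - 4 * \<rho> t" using r2 by auto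
  show ?thesis
  proof (intro exI conjI ballI)
    show "min t1 (1/2) > 0" "min t1 (1/2) < (1::real)" using t1 by auto
    fix t assume t: "t \<in> {0<..<min t1 (1/2)}"
    then have "t > 0" "t\<^sup>2 * \<rho>2 t \<ge> - 4 * \<rho> t" using t1 by auto
    then show "t\<^sup>2 * g2Z \<rho> \<rho>1 \<rho>2 t \<ge> - 6 * gZ \<rho> t"
      unfolding g2Z_def gZ_def using g2_bound[of "\<rho> t" t "\<rho>1 t" "\<rho>2 t"] nn'[of t] r1[of t] r1'[of t] by simp
  qed
qed

lemma Zlog: assumes "t \<ge> 1" shows "Zf \<rho> t \<le> Zf \<rho> 1 + ln t"
proof -
  have "ln 1 - Zf \<rho> 1 \<le> ln t - Zf \<rho> t"
  proof (rule DERIV_nonneg_imp_increasing_open[OF assms])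
    show "continuous_on {1..t} (\<lambda>u. ln u - Zf \<rho> u)"
      using continuous_on_subset[OF Zcont, of "{1..t}"]
      by (intro continuous_on_diff continuous_on_ln continuous_on_id) auto
    fix u assume u: "1 < u" "u < t"
    have d: "((\<lambda>u. ln u - Zf \<rho> u) has_real_derivative (1 / u - gZ \<rho> u)) (at u)"
      using u by (intro DERIV_diff DERIV_ln_divide Zd1) auto
    have "\<rho> u \<ge> 0" using u nn' by simp
    then have "gZ \<rho> u \<le> 1 / u" unfolding gZ_def using u
      by (simp add: divide_simps)
    then show "\<exists>d. ((\<lambda>u. ln u - Zf \<rho> u) has_real_derivative d) (at u) \<and> 0 \<le> d" using d by fastforce
  qed
  then show ?thesis by simp
qed

lemma small: "\<exists>d>0. \<forall>t. 0 < t \<and> t < d \<longrightarrow> \<rho> t \<le> 1"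
proof -
  obtain d where d: "d > 0" "\<forall>x'\<in>{0..}. dist x' 0 < d \<longrightarrow> dist (\<rho> x') (\<rho> 0) < 1"
    using cont unfolding continuous_on_iff by (metis atLeast_iff order_refl zero_less_one)
  show ?thesis using d z0 by (intro exI[of _ d]) (auto simp: dist_real_def)
qed

lemma Zbound: assumes t: "t \<ge> 0" shows "Zf \<rho> t \<le> Zf \<rho> 1 + ln (1 + t)"
proof (cases "t \<le> 1")
  case True
  then have "Zf \<rho> t \<le> Zf \<rho> 1" using t by (intro mono_onD[OF Zmono]) auto
  moreover have "ln (1 + t) \<ge> 0" using t by simp
  ultimately show ?thesis by linarith
next
  case False
  then have "Zf \<rho> t \<le> Zf \<rho> 1 + ln t" by (intro Zlog) auto
  moreover have "ln t \<le> ln (1 + t)" using False by simp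
  ultimately show ?thesis by linarith
qed

lemma Zpos: assumes pos: "\<And>u. u > 0 \<Longrightarrow> \<rho> u > 0" and t: "t > 0" shows "Zf \<rho> t > 0"
proof -
  have dif: "Zf \<rho> differentiable (at u)" if "0 < u" for u
    using Zd1[OF that] real_differentiable_def by blast
  obtain l z where lz: "0 < z" "z < t" "DERIV (Zf \<rho>) z :> l" "Zf \<rho> t - Zf \<rho> 0 = (t - 0) * l"
    using MVT[OF t continuous_on_subset[OF Zcont]] dif by fastforce
  have "l = gZ \<rho> z" using lz Zd1 DERIV_unique by blast
  moreover have "gZ \<rho> z > 0" unfolding gZ_def using pos[of z] lz by simp
  ultimately show ?thesis using lz t Z0 by simp
qed

end
lemma rhoA:
  fixes K s :: real assumes K: "K > 0" and s: "0 < s" "s < 1"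
  shows "rho (\<lambda>t. K * t powr s) (\<lambda>t. K * (s * t powr (s - 1))) (\<lambda>t. K * (s * ((s - 1) * t powr (s - 1 - 1))))"
proof
  show "continuous_on {0..} (\<lambda>t. K * t powr s)"
    using s by (intro continuous_on_mult continuous_on_const continuous_on_powr' continuous_on_id) auto
  show "\<forall>t\<ge>0. 0 \<le> K * t powr s" using K by simp
  show "K * 0 powr s = 0" by simp
  show "(\<lambda>u. K * u powr s / u) integrable_on {0..1}"
  proof (rule integrable_eq)
    show "(\<lambda>u. K * u powr (s - 1)) integrable_on {0..1}"
      by (rule integrable_on_mult_right, rule integrable_on_powr_from_0) (use s in auto)
    fix x :: real assume x: "x \<in> {0..1}"
    show "K * x powr (s - 1) = K * x powr s / x"
    proof (cases "x = 0")
      case False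
      then have "x > 0" using x by auto
      then show ?thesis by (simp add: powr_diff)
    qed simp
  qed
  show "mono_on {0..} (\<lambda>t. K * t powr s)"
    by (rule mono_onI) (use K s in \<open>auto intro!: mult_left_mono powr_mono2\<close>)
  fix t :: real assume t: "t > 0"
  show "((\<lambda>t. K * t powr s) has_real_derivative K * (s * t powr (s - 1))) (at t)"
    by (rule DERIV_cmult, rule has_real_derivative_powr[OF t])
  show "((\<lambda>t. K * (s * t powr (s - 1))) has_real_derivative K * (s * ((s - 1) * t powr (s - 1 - 1)))) (at t)"
    by (rule DERIV_cmult, rule DERIV_cmult, rule has_real_derivative_powr[OF t])
  show "0 \<le> K * (s * t powr (s - 1))" using K s by simp
  have "t * t powr (s - 1) = t powr s" using t by (simp add: powr_mult_base)
  then have "t * (K * (s * t powr (s - 1))) = K * s * t powr s" by (simp add: algebra_simps)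
  also have "\<dots> \<le> K * t powr s" using K s by (intro mult_right_mono) auto
  finally show "t * (K * (s * t powr (s - 1))) \<le> K * t powr s" .
next
  show "continuous_on {0<..} (\<lambda>t. K * (s * ((s - 1) * t powr (s - 1 - 1))))"
    by (intro continuous_on_mult continuous_on_const continuous_on_powr' continuous_on_id) auto
  show "\<exists>t1>0. \<forall>t\<in>{0<..<t1}. t\<^sup>2 * (K * (s * ((s - 1) * t powr (s - 1 - 1)))) \<ge> - 4 * (K * t powr s)"
  proof (intro exI[of _ 1] conjI ballI)
    fix t :: real assume t: "t \<in> {0<..<1}"
    have "t\<^sup>2 * t powr (s - 1 - 1) = t powr s"
      using t by (simp add: power2_eq_square powr_mult_base algebra_simps)
    moreover have e0: "\<And>X::real. t\<^sup>2 * (K * (s * ((s - 1) * X))) = (s * (s - 1)) * (K * (t\<^sup>2 * X))"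
      by (simp add: algebra_simps)
    ultimately have e: "t\<^sup>2 * (K * (s * ((s - 1) * t powr (s - 1 - 1)))) = (s * (s - 1)) * (K * t powr s)"
      by (simp only:)
    have "s * (1 - s) \<le> 1" using s by (intro mult_le_one) auto
    moreover have "s * (s - 1) = - (s * (1 - s))" by (simp add: algebra_simps)
    ultimately have "s * (s - 1) \<ge> -4" by linarith
    then have "(s * (s - 1)) * (K * t powr s) \<ge> -4 * (K * t powr s)"
      using K by (intro mult_right_mono) auto
    then show "t\<^sup>2 * (K * (s * ((s - 1) * t powr (s - 1 - 1)))) \<ge> - 4 * (K * t powr s)" unfolding e .
  qed simp
qed

lemma rhoB:
  fixes K \<iota> :: real and \<omega> :: "real \<Rightarrow> real"
  assumes K: "K > 0" and M: "cond_M \<iota> \<omega>"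
  shows "rho (\<lambda>t. K * \<omega> t) (\<lambda>t. K * deriv \<omega> t) (\<lambda>t. K * deriv (deriv \<omega>) t)"
proof -
  have nnw: "\<forall>t\<ge>0. \<omega> t \<ge> 0" and contw: "continuous_on {0..} \<omega>" and monow: "mono_on {0..} \<omega>"
    and concw: "concave_on {0..} \<omega>" and Ck: "Ck_on 2 \<omega> {0<..}" and w0: "\<omega> 0 = 0"
    and intw: "(\<lambda>t. \<omega> t / t) integrable_on {0..1}"
    and ex: "\<exists>t0>0. antimono_on {0<..<t0} (\<lambda>t. \<omega> t / t powr \<iota>) \<and>
        (\<forall>t\<in>{0<..<t0}. t\<^sup>2 * deriv (deriv \<omega>) t \<ge> - \<omega> t - 3 * t * deriv \<omega> t)"
    using M unfolding cond_M_def by auto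
  have CkA: "\<forall>j<2. \<forall>x\<in>{0<..}. ((deriv ^^ j) \<omega> has_real_derivative (deriv ^^ Suc j) \<omega> x) (at x)"
    using Ck unfolding Ck_on_def by blast
  have dw1: "(\<omega> has_real_derivative deriv \<omega> t) (at t)" if "t > 0" for t
    using CkA[rule_format, of 0 t] that by simp
  have dw2: "(deriv \<omega> has_real_derivative deriv (deriv \<omega>) t) (at t)" if "t > 0" for t
  proof -
    have "((deriv ^^ 1) \<omega> has_real_derivative (deriv ^^ Suc 1) \<omega> t) (at t)"
      using CkA[rule_format, of 1 t] that by simp
    then show ?thesis by (simp add: numeral_2_eq_2)
  qed
  have cw2: "continuous_on {0<..} (deriv (deriv \<omega>))"
    using Ck unfolding Ck_on_def by (simp add: numeral_2_eq_2)
  have w1nn: "deriv \<omega> t \<ge> 0" if t: "t > 0" for t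
  proof (rule ccontr)
    assume "\<not> deriv \<omega> t \<ge> 0"
    then obtain d where d: "d > 0" "\<forall>h>0. h < d \<longrightarrow> \<omega> t > \<omega> (t + h)"
      using DERIV_neg_dec_right[OF dw1[OF t]] by auto
    then have "\<omega> t > \<omega> (t + d/2)" by auto
    moreover have "\<omega> t \<le> \<omega> (t + d/2)" using monow t d by (intro mono_onD[OF monow]) auto
    ultimately show False by simp
  qed
  have w1le: "t * deriv \<omega> t \<le> \<omega> t" if t: "t > 0" for t
  proof -
    have cv: "convex_on {0..} (\<lambda>x. - \<omega> x)" using concw unfolding concave_on_def .
    have "(\<lambda>x. - \<omega> x) 0 - (\<lambda>x. - \<omega> x) t \<ge> (- deriv \<omega> t) * (0 - t)"
    proof (rule convex_on_imp_above_tangent[OF cv])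
      show "connected {0::real..}" by (simp add: is_interval_connected)
      show "t \<in> interior {0..}" using t by simp
      show "(0::real) \<in> {0..}" by simp
      show "((\<lambda>x. - \<omega> x) has_real_derivative - deriv \<omega> t) (at t within {0..})"
        by (rule has_field_derivative_at_within, rule DERIV_minus, rule dw1[OF t])
    qed
    then show ?thesis using w0 by (simp add: mult.commute)
  qed
  show ?thesis
  proof
    show "continuous_on {0..} (\<lambda>t. K * \<omega> t)" by (intro continuous_on_mult continuous_on_const contw)
    show "\<forall>t\<ge>0. 0 \<le> K * \<omega> t" using K nnw by simp
    show "K * \<omega> 0 = 0" using w0 by simp
    show "(\<lambda>u. K * \<omega> u / u) integrable_on {0..1}"
      by (rule integrable_eq[OF integrable_on_mult_right[OF intw, of K]]) simp
    show "mono_on {0..} (\<lambda>t. K * \<omega> t)"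
      by (rule mono_onI) (use K in \<open>auto intro!: mult_left_mono mono_onD[OF monow]\<close>)
    fix t :: real assume t: "t > 0"
    show "((\<lambda>t. K * \<omega> t) has_real_derivative K * deriv \<omega> t) (at t)"
      by (rule DERIV_cmult, rule dw1[OF t])
    show "((\<lambda>t. K * deriv \<omega> t) has_real_derivative K * deriv (deriv \<omega>) t) (at t)"
      by (rule DERIV_cmult, rule dw2[OF t])
    show "0 \<le> K * deriv \<omega> t" using K w1nn[OF t] by simp
    show "t * (K * deriv \<omega> t) \<le> K * \<omega> t" using K w1le[OF t]
      by (metis mult.left_commute mult_le_cancel_left_pos)
  next
    show "continuous_on {0<..} (\<lambda>t. K * deriv (deriv \<omega>) t)" by (intro continuous_on_mult continuous_on_const cw2)
    obtain t0 where t0: "t0 > 0" "\<forall>t\<in>{0<..<t0}. t\<^sup>2 * deriv (deriv \<omega>) t \<ge> - \<omega> t - 3 * t * deriv \<omega> t"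
      using ex by auto
    show "\<exists>t1>0. \<forall>t\<in>{0<..<t1}. t\<^sup>2 * (K * deriv (deriv \<omega>) t) \<ge> - 4 * (K * \<omega> t)"
    proof (intro exI[of _ t0] conjI ballI)
      fix t assume t: "t \<in> {0<..<t0}"
      then have "t\<^sup>2 * deriv (deriv \<omega>) t \<ge> - 4 * \<omega> t" using t0 w1le[of t] by fastforce
      then have "K * (t\<^sup>2 * deriv (deriv \<omega>) t) \<ge> K * (- 4 * \<omega> t)" using K by (intro mult_left_mono) auto
      then show "t\<^sup>2 * (K * deriv (deriv \<omega>) t) \<ge> - 4 * (K * \<omega> t)" by (simp add: algebra_simps)
    qed (use t0 in simp)
  qed
qed

lemma phi_half: fixes r :: real assumes "0 \<le> r" "r \<le> 1" shows "r / 2 \<le> r / (1 + r)"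
  using assms by (intro divide_left_mono) auto

lemma ln_bound: fixes s t :: real assumes s: "s > 0" and t: "t \<ge> 0"
  shows "2 * ln (1 + t) \<le> (4 / s) * (1 + t) powr (s / 2)"
proof -
  define x where "x = (1 + t) powr (s / 2)"
  have x: "x > 0" using t by (simp add: x_def)
  have "ln x = (s / 2) * ln (1 + t)" using t by (simp add: x_def ln_powr)
  moreover have "ln x \<le> x - 1" using x by (rule ln_le_minus_one)
  ultimately have "(s / 2) * ln (1 + t) \<le> x" by linarith
  then have "s * (2 * ln (1 + t)) \<le> s * ((4 / s) * x)" using s by (simp add: field_simps)
  then show ?thesis using s unfolding x_def by (simp only: mult_le_cancel_left_pos)
qed

theorem lemma5p6:
  fixes s \<iota> C :: real and \<omega> :: "real \<Rightarrow> real"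
  assumes "0 < s" "s < 1"
    and "0 < \<iota>" "\<iota> < min s (1/3)"
    and "cond_M \<iota> \<omega>"
    and "C > 0"
  shows "\<exists>t0 > 0. \<exists>\<zeta> :: real \<Rightarrow> real.
     (\<forall>t\<ge>0. \<zeta> t \<ge> 0) \<and>
     continuous_on {0..} \<zeta> \<and> Ck_on 2 \<zeta> {0<..} \<and> Ck_on 3 \<zeta> {0<..<2} \<and>
     \<comment> \<open>(Z0)\<close>
     (\<forall>t>0. \<zeta> t > 0) \<and> mono_on {0..} \<zeta> \<and> concave_on {0..} \<zeta> \<and> \<zeta> 0 = 0 \<and>
     \<comment> \<open>(Z1)\<close>
     (\<exists>c1>0. \<exists>t1. 0 < t1 \<and> t1 < 1 \<and>
        (\<forall>t\<in>{0<..<t1}. t\<^sup>2 * (deriv ^^ 3) \<zeta> t \<ge> - c1 * deriv \<zeta> t)) \<and>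
     \<comment> \<open>(Z2)\<close>
     mono_on {0<..} (\<lambda>t. t * deriv \<zeta> t) \<and>
     \<comment> \<open>(Z3)\<close>
     (\<exists>\<iota>'>0. \<exists>t3>0. antimono_on {0<..t3} (\<lambda>t. \<zeta> t / t powr \<iota>')) \<and>
     \<comment> \<open>(Z4)\<close>
     (\<exists>c2>0. \<forall>t\<ge>0. \<zeta> t \<le> c2 * (1 + t) powr (s / 2)) \<and>
     (\<forall>t\<in>{0<..<t0}. C * (t powr s + \<omega> t) \<le> t * deriv \<zeta> t)"
proof -
  note s = assms(1,2) and M = assms(5) and C = assms(6)
  define K where "K = 2 * C"
  have K: "K > 0" using C by (simp add: K_def)
  define \<rho>A where "\<rho>A = (\<lambda>t::real. K * t powr s)"
  define \<rho>A1 where "\<rho>A1 = (\<lambda>t::real. K * (s * t powr (s - 1)))"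
  define \<rho>A2 where "\<rho>A2 = (\<lambda>t::real. K * (s * ((s - 1) * t powr (s - 1 - 1))))"
  define \<rho>B where "\<rho>B = (\<lambda>t. K * \<omega> t)"
  define \<rho>B1 where "\<rho>B1 = (\<lambda>t. K * deriv \<omega> t)"
  define \<rho>B2 where "\<rho>B2 = (\<lambda>t. K * deriv (deriv \<omega>) t)"
  have rA: "rho \<rho>A \<rho>A1 \<rho>A2" unfolding \<rho>A_def \<rho>A1_def \<rho>A2_def by (rule rhoA[OF K s])
  have rB: "rho \<rho>B \<rho>B1 \<rho>B2" unfolding \<rho>B_def \<rho>B1_def \<rho>B2_def by (rule rhoB[OF K M])
  interpret A: rho \<rho>A \<rho>A1 \<rho>A2 by (rule rA)
  interpret B: rho \<rho>B \<rho>B1 \<rho>B2 by (rule rB)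
  define \<zeta> where "\<zeta> = (\<lambda>t. Zf \<rho>A t + Zf \<rho>B t)"
  define f1 where "f1 = (\<lambda>t. gZ \<rho>A t + gZ \<rho>B t)"
  define f2 where "f2 = (\<lambda>t. g1Z \<rho>A \<rho>A1 t + g1Z \<rho>B \<rho>B1 t)"
  define f3 where "f3 = (\<lambda>t. g2Z \<rho>A \<rho>A1 \<rho>A2 t + g2Z \<rho>B \<rho>B1 \<rho>B2 t)"
  have D1: "(\<zeta> has_real_derivative f1 x) (at x)" if "x > 0" for x
    unfolding \<zeta>_def f1_def by (rule DERIV_add[OF A.Zd1[OF that] B.Zd1[OF that]])
  have D2: "(f1 has_real_derivative f2 x) (at x)" if "x > 0" for x
    unfolding f1_def f2_def by (rule DERIV_add[OF A.Zd2[OF that] B.Zd2[OF that]])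
  have D3: "(f2 has_real_derivative f3 x) (at x)" if "x > 0" for x
    unfolding f2_def f3_def by (rule DERIV_add[OF A.Zd3[OF that] B.Zd3[OF that]])
  have C3: "continuous_on {0<..} f3"
    unfolding f3_def by (rule continuous_on_add[OF A.Zc3 B.Zc3])
  have CkI: "Ck_on 3 \<zeta> {0<..}" "Ck_on 2 \<zeta> {0<..}" "\<And>x. x \<in> {0<..} \<Longrightarrow> deriv \<zeta> x = f1 x"
    "\<And>x. x \<in> {0<..} \<Longrightarrow> (deriv ^^ 3) \<zeta> x = f3 x"
    by (rule Ck3_lemma[of "{0<..}" \<zeta> f1 f2 f3]; (use D1 D2 D3 C3 in simp)?)+
  have h4: "Ck_on 3 \<zeta> {0<..<2}"
    by (rule Ck3_lemma(1)[of "{0<..<2}" \<zeta> f1 f2 f3])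
       (use D1 D2 D3 continuous_on_subset[OF C3, of "{0<..<2}"] in \<open>auto simp: subset_eq\<close>)
  have dz: "deriv \<zeta> t = f1 t" if "t > 0" for t using CkI(3) that by simp
  have tdz: "t * deriv \<zeta> t = \<rho>A t / (1 + \<rho>A t) + \<rho>B t / (1 + \<rho>B t)" if "t > 0" for t
    using dz[OF that] A.tg[OF that] B.tg[OF that] unfolding f1_def by (simp add: distrib_left)
  have h1: "\<forall>t\<ge>0. \<zeta> t \<ge> 0" unfolding \<zeta>_def using A.Znn B.Znn by (simp add: add_nonneg_nonneg)
  have h2: "continuous_on {0..} \<zeta>" unfolding \<zeta>_def by (rule continuous_on_add[OF A.Zcont B.Zcont])
  have h5: "\<forall>t>0. \<zeta> t > 0"
  proof (intro allI impI)
    fix t :: real assume t: "t > 0"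
    have "Zf \<rho>A t > 0" by (rule A.Zpos[OF _ t]) (use K in \<open>simp add: \<rho>A_def\<close>)
    moreover have "Zf \<rho>B t \<ge> 0" using B.Znn t by simp
    ultimately show "\<zeta> t > 0" unfolding \<zeta>_def by simp
  qed
  have h6: "mono_on {0..} \<zeta>"
    unfolding \<zeta>_def by (rule mono_onI, rule add_mono; rule mono_onD[OF A.Zmono] mono_onD[OF B.Zmono]; assumption)
  have h7: "concave_on {0..} \<zeta>" unfolding \<zeta>_def by (rule concave_on_add[OF A.Zconc B.Zconc])
  have h8: "\<zeta> 0 = 0" unfolding \<zeta>_def by (simp add: A.Z0 B.Z0)
  have h9: "\<exists>c1>0. \<exists>t1. 0 < t1 \<and> t1 < 1 \<and>
        (\<forall>t\<in>{0<..<t1}. t\<^sup>2 * (deriv ^^ 3) \<zeta> t \<ge> - c1 * deriv \<zeta> t)"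
  proof -
    obtain tA where tA: "tA > 0" "tA < 1" "\<forall>t\<in>{0<..<tA}. t\<^sup>2 * g2Z \<rho>A \<rho>A1 \<rho>A2 t \<ge> - 6 * gZ \<rho>A t"
      using A.Z1 by blast
    obtain tB where tB: "tB > 0" "tB < 1" "\<forall>t\<in>{0<..<tB}. t\<^sup>2 * g2Z \<rho>B \<rho>B1 \<rho>B2 t \<ge> - 6 * gZ \<rho>B t"
      using B.Z1 by blast
    have all: "\<forall>t\<in>{0<..<min tA tB}. t\<^sup>2 * (deriv ^^ 3) \<zeta> t \<ge> - 6 * deriv \<zeta> t"
    proof
      fix t assume t: "t \<in> {0<..<min tA tB}"
      have ta: "t \<in> {0<..<tA}" and tb: "t \<in> {0<..<tB}" using t by auto
      have "t\<^sup>2 * f3 t \<ge> - 6 * f1 t" unfolding f3_def f1_def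
        using tA(3)[rule_format, OF ta] tB(3)[rule_format, OF tb] by (simp add: distrib_left)
      then show "t\<^sup>2 * (deriv ^^ 3) \<zeta> t \<ge> - 6 * deriv \<zeta> t" using CkI(4)[of t] dz[of t] t by simp
    qed
    have "(6::real) > 0" "0 < min tA tB" "min tA tB < 1" using tA tB by auto
    then show ?thesis using all by blast
  qed
  have h10: "mono_on {0<..} (\<lambda>t. t * deriv \<zeta> t)"
  proof (rule mono_onI)
    fix x y :: real assume xy: "x \<in> {0<..}" "y \<in> {0<..}" "x \<le> y"
    show "x * deriv \<zeta> x \<le> y * deriv \<zeta> y"
      using tdz[of x] tdz[of y] xy A.Phi_mono[of x y] B.Phi_mono[of x y] by simp
  qed
  have h11: "\<exists>\<iota>'>0. \<exists>t3>0. antimono_on {0<..t3} (\<lambda>t. \<zeta> t / t powr \<iota>')"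
  proof (intro exI[of _ 1] conjI)
    show "antimono_on {0<..1} (\<lambda>t. \<zeta> t / t powr 1)"
    proof (rule monotone_onI)
      fix x y :: real assume xy: "x \<in> {0<..1}" "y \<in> {0<..1}" "x \<le> y"
      have x: "x > 0" and y: "y > 0" using xy by auto
      have "\<zeta> ((1 - x / y) *\<^sub>R 0 + (x / y) *\<^sub>R y) \<ge> (1 - x / y) * \<zeta> 0 + (x / y) * \<zeta> y"
        by (rule concave_onD[OF h7]) (use x y xy in auto)
      then have "\<zeta> x \<ge> (x / y) * \<zeta> y" using h8 y by simp
      then have "\<zeta> y / y \<le> \<zeta> x / x" using x y by (simp add: field_simps)
      then show "\<zeta> y / y powr 1 \<le> \<zeta> x / x powr 1" using x y by simp
    qed
  qed auto
  have h12: "\<exists>c2>0. \<forall>t\<ge>0. \<zeta> t \<le> c2 * (1 + t) powr (s / 2)"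
  proof (intro exI[of _ "Zf \<rho>A 1 + Zf \<rho>B 1 + 4 / s"] conjI allI impI)
    have "Zf \<rho>A 1 \<ge> 0" "Zf \<rho>B 1 \<ge> 0" using A.Znn B.Znn by auto
    moreover have "4 / s > 0" using s by simp
    ultimately show "Zf \<rho>A 1 + Zf \<rho>B 1 + 4 / s > 0" by linarith
    fix t :: real assume t: "t \<ge> 0"
    define x where "x = (1 + t) powr (s / 2)"
    have x1: "x \<ge> 1" unfolding x_def using t s by (intro ge_one_powr_ge_zero) auto
    have z: "Zf \<rho>A 1 \<ge> 0" "Zf \<rho>B 1 \<ge> 0" using A.Znn B.Znn by auto
    have "Zf \<rho>A 1 \<le> Zf \<rho>A 1 * x" "Zf \<rho>B 1 \<le> Zf \<rho>B 1 * x"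
      using z x1 by (simp_all add: mult_le_cancel_left1)
    moreover have "2 * ln (1 + t) \<le> (4 / s) * x" unfolding x_def by (rule ln_bound[OF s(1) t])
    moreover have "\<zeta> t \<le> Zf \<rho>A 1 + Zf \<rho>B 1 + 2 * ln (1 + t)"
      unfolding \<zeta>_def using A.Zbound[OF t] B.Zbound[OF t] by linarith
    ultimately show "\<zeta> t \<le> (Zf \<rho>A 1 + Zf \<rho>B 1 + 4 / s) * (1 + t) powr (s / 2)"
      unfolding x_def[symmetric] by (simp add: distrib_right)
  qed
  obtain dA where dA: "dA > 0" "\<forall>t. 0 < t \<and> t < dA \<longrightarrow> \<rho>A t \<le> 1" using A.small by blast
  obtain dB where dB: "dB > 0" "\<forall>t. 0 < t \<and> t < dB \<longrightarrow> \<rho>B t \<le> 1" using B.small by blast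
  have h13: "\<forall>t\<in>{0<..<min dA dB}. C * (t powr s + \<omega> t) \<le> t * deriv \<zeta> t"
  proof
    fix t assume t: "t \<in> {0<..<min dA dB}"
    then have t0: "t > 0" by simp
    have a: "\<rho>A t / 2 \<le> \<rho>A t / (1 + \<rho>A t)"
      by (rule phi_half) (use A.nn' t0 dA t in auto)
    have b: "\<rho>B t / 2 \<le> \<rho>B t / (1 + \<rho>B t)"
      by (rule phi_half) (use B.nn' t0 dB t in auto)
    have "C * (t powr s + \<omega> t) = \<rho>A t / 2 + \<rho>B t / 2"
      unfolding \<rho>A_def \<rho>B_def K_def by (simp add: algebra_simps)
    then show "C * (t powr s + \<omega> t) \<le> t * deriv \<zeta> t" using a b tdz[OF t0] by linarith
  qed
  have t0: "min dA dB > 0" using dA dB by simp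
  show ?thesis
    apply (rule exI[of _ "min dA dB"])
    apply (rule conjI, rule t0)
    apply (rule exI[of _ \<zeta>])
    apply (intro conjI)
                 apply (fact h1)
                apply (fact h2)
               apply (fact CkI(2))
              apply (fact h4)
             apply (fact h5)
            apply (fact h6)
           apply (fact h7)
          apply (fact h8)
         apply (fact h9)
        apply (fact h10)
       apply (fact h11)
      apply (fact h12)
     apply (fact h13)
    done
qed

end
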